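(* Let $V$ be a finite-dimensional vector space over $\mathbb{F}_q$ and $s_1,s_2,s_3$ transvections in $\mathrm{SL}(V)$. Then \[w(s_1,s_2,s_3)-w(s_1,s_3,s_2)=w(s_1,s_3)-w(s_1,s_2)w(s_2,s_3)-w(s_1^{s_2},s_3).\]
   Context: Transvections $s_i=1+u_i\otimes\phi_i$, i.e. $x\mapsto x+\phi_i(x)u_i$ with $\phi_i(u_i)=0$. For transvections $r_1,\dots,r_k$ ($k\ge2$), $w(r_1,\dots,r_k)=\prod_{i=1}^k\phi_{r_{i+1}}(u_{r_i})$ (indices mod $k$), which is independent of the chosen representations. $s^g=g^{-1}sg$. *)

theory Defs
  imports "HOL-Analysis.Analysis"
begin

text \<open>V = 'a^'n with 'a a finite field (some F_q) and 'n a finite index type.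
  Linear functionals on V are represented by coefficient vectors.\<close>

definition fapp :: "'a::comm_ring_1^'n \<Rightarrow> 'a^'n \<Rightarrow> 'a" where
  "fapp f x = (\<Sum>i\<in>UNIV. f $ i * x $ i)"

definition tv_rep :: "'a::comm_ring_1^'n^'n \<Rightarrow> 'a^'n \<Rightarrow> 'a^'n \<Rightarrow> bool" where
  "tv_rep s u f \<longleftrightarrow> fapp f u = 0 \<and> s = mat 1 + (\<chi> i j. u $ i * f $ j)"

definition transvection :: "'a::comm_ring_1^'n^'n \<Rightarrow> bool" where
  "transvection s \<longleftrightarrow> s \<noteq> mat 1 \<and> (\<exists>u f. tv_rep s u f)"

definition tv_u :: "'a::comm_ring_1^'n^'n \<Rightarrow> 'a^'n" where
  "tv_u s = fst (SOME p. tv_rep s (fst p) (snd p))"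

definition tv_f :: "'a::comm_ring_1^'n^'n \<Rightarrow> 'a^'n" where
  "tv_f s = snd (SOME p. tv_rep s (fst p) (snd p))"

definition w :: "('a::comm_ring_1^'n^'n) list \<Rightarrow> 'a" where
  "w rs = (\<Prod>i<length rs. fapp (tv_f (rs ! ((i + 1) mod length rs))) (tv_u (rs ! i)))"

definition conj_by :: "'a::field^'n^'n \<Rightarrow> 'a^'n^'n \<Rightarrow> 'a^'n^'n" where
  "conj_by s g = matrix_inv g ** s ** g"

end

theory Submission
  imports Defs
begin

definition outer :: "'a::comm_ring_1^'n \<Rightarrow> 'a^'n \<Rightarrow> 'a^'n^'n" where
  "outer u f = (\<chi> i j. u $ i * f $ j)"

lemma fapp_add_r: "fapp f (x + y) = fapp f x + fapp f y"
  by (simp add: fapp_def distrib_left sum.distrib)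
lemma fapp_diff_r: "fapp f (x - y) = fapp f x - fapp f y"
  by (simp add: fapp_def right_diff_distrib sum_subtractf)
lemma fapp_smult_r: "fapp f (c *s x) = c * fapp f x"
  by (simp add: fapp_def sum_distrib_left algebra_simps)
lemma fapp_add_l: "fapp (f + g) x = fapp f x + fapp g x"
  by (simp add: fapp_def distrib_right sum.distrib)
lemma fapp_smult_l: "fapp (c *s f) x = c * fapp f x"
  by (simp add: fapp_def sum_distrib_left algebra_simps)

lemma outer_mult: "outer a b ** outer c d = outer a (fapp b c *s d)"
  unfolding outer_def matrix_matrix_mult_def fapp_def
  by (simp add: vec_eq_iff sum_distrib_left sum_distrib_right mult_ac)

lemma mm_add_r: "((A::'a::comm_ring_1^'n^'n) + B) ** C = A ** C + B ** C"
  by (simp add: matrix_matrix_mult_def vec_eq_iff distrib_right sum.distrib)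
lemma mm_diff_r: "((A::'a::comm_ring_1^'n^'n) - B) ** C = A ** C - B ** C"
  by (simp add: matrix_matrix_mult_def vec_eq_iff left_diff_distrib sum_subtractf)
lemma mm_diff_l: "(A::'a::comm_ring_1^'n^'n) ** (B - C) = A ** B - A ** C"
  by (simp add: matrix_matrix_mult_def vec_eq_iff right_diff_distrib sum_subtractf)

lemma outer_zero_r [simp]: "outer u 0 = 0"
  by (simp add: outer_def vec_eq_iff)

lemma l2: "{..<2::nat} = {0,1}" by auto
lemma l3: "{..<3::nat} = {0,1,2}" by auto
lemma w3: "w [a,b,c] = fapp (tv_f b) (tv_u a) * fapp (tv_f c) (tv_u b) * fapp (tv_f a) (tv_u c)"
  unfolding w_def l3 by (simp add: mult.assoc)
lemma w2: "w [a,b] = fapp (tv_f b) (tv_u a) * fapp (tv_f a) (tv_u b)"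
  unfolding w_def l2 by simp

lemma rep_some:
  assumes "\<exists>u f. tv_rep s u f"
  shows "tv_rep s (tv_u s) (tv_f s)"
proof -
  from assms obtain u f where "tv_rep s u f" by blast
  then have "\<exists>p. tv_rep s (fst p) (snd p)" by (intro exI[of _ "(u,f)"]) simp
  from someI_ex[OF this] show ?thesis unfolding tv_u_def tv_f_def .
qed

lemma rep_bilin:
  assumes "tv_rep s u f" "tv_rep s u' f'"
  shows "fapp g u * fapp f v = fapp g u' * fapp f' v"
proof -
  have e: "u $ i * f $ j = u' $ i * f' $ j" for i j
  proof -
    from assms have "mat 1 + (\<chi> i j. u $ i * f $ j) = mat 1 + (\<chi> i j. u' $ i * f' $ j)"
      unfolding tv_rep_def by simp
    then have "(\<chi> i j. u $ i * f $ j) = (\<chi> i j. u' $ i * f' $ j)"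
      by (rule add_left_imp_eq)
    then have "(\<chi> i j. u $ i * f $ j) $ i $ j = (\<chi> i j. u' $ i * f' $ j) $ i $ j"
      by (rule arg_cong)
    then show ?thesis by simp
  qed
  have r: "(g$i * x$i) * (h$j * v$j) = g$i * ((x$i * h$j) * v$j)" for x h i j
    by (simp add: mult.assoc)
  have "fapp g u * fapp f v = (\<Sum>i\<in>UNIV. \<Sum>j\<in>UNIV. g$i * ((u$i * f$j) * v$j))"
    unfolding fapp_def sum_product r ..
  also have "\<dots> = (\<Sum>i\<in>UNIV. \<Sum>j\<in>UNIV. g$i * ((u'$i * f'$j) * v$j))"
    unfolding e ..
  also have "\<dots> = fapp g u' * fapp f' v"
    unfolding fapp_def sum_product r ..
  finally show ?thesis .
qed

lemma inv_tv:
  fixes s :: "'a::field^'n^'n"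
  assumes "tv_rep s u f"
  shows "matrix_inv s = mat 1 - outer u f"
proof -
  have s: "s = mat 1 + outer u f" and z: "fapp f u = 0"
    using assms unfolding tv_rep_def outer_def by auto
  let ?B = "mat 1 - outer u f"
  have oo: "outer u f ** outer u f = 0" by (simp add: outer_mult z)
  have 1: "s ** ?B = mat 1"
    by (simp add: s matrix_add_ldistrib mm_add_r mm_diff_l
        mm_diff_r mm_add_r oo)
  have 2: "?B ** s = mat 1"
    by (simp add: s matrix_add_ldistrib mm_add_r mm_diff_l
        mm_diff_r mm_add_r oo)
  have "\<exists>A'. s ** A' = mat 1 \<and> A' ** s = mat 1" using 1 2 by blast
  from someI_ex[OF this] have h: "s ** matrix_inv s = mat 1 \<and> matrix_inv s ** s = mat 1"
    unfolding matrix_inv_def .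
  have "matrix_inv s = matrix_inv s ** (s ** ?B)" by (simp add: 1)
  also have "\<dots> = ?B" by (simp add: matrix_mul_assoc h)
  finally show ?thesis .
qed

lemma outer_expand:
  "outer (u - c *s v) (f + d *s g) = outer u f + outer u (d *s g) - outer v (c *s f) - outer v ((c*d) *s g)"
  by (simp add: outer_def vec_eq_iff algebra_simps)

lemma Ctest:
  fixes u1 f1 u2 f2 :: "'a::field^'n"
  assumes z2: "fapp f2 u2 = 0"
  shows "(mat 1 - outer u2 f2) ** (mat 1 + outer u1 f1) ** (mat 1 + outer u2 f2) = mat 1 + outer (u1 - fapp f2 u1 *s u2) (f1 + fapp f1 u2 *s f2)"
proof -
  let ?X = "outer u2 f2" and ?Y = "outer u1 f1" and ?Z = "outer u2 (fapp f2 u1 *s f1)"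
  have XY: "?X ** ?Y = ?Z" by (rule outer_mult)
  have YX: "?Y ** ?X = outer u1 (fapp f1 u2 *s f2)" by (rule outer_mult)
  have XX: "?X ** ?X = 0" by (simp add: outer_mult z2)
  have ZX: "?Z ** ?X = outer u2 ((fapp f2 u1 * fapp f1 u2) *s f2)"
    by (simp add: outer_mult fapp_smult_l)
  have 1: "(mat 1 - ?X) ** (mat 1 + ?Y) = mat 1 + ?Y - ?X - ?Z"
    by (simp add: matrix_add_ldistrib mm_diff_r XY)
  have 2: "(mat 1 + ?Y - ?X - ?Z) ** (mat 1 + ?X) = mat 1 + ?Y - ?X - ?Z + ?X + ?Y ** ?X - ?X ** ?X - ?Z ** ?X"
    by (simp add: matrix_add_ldistrib mm_diff_r mm_add_r)
  show ?thesis
    unfolding 1 2 YX XX ZX outer_expand by (simp add: algebra_simps)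
qed

theorem lemma4p11:
  fixes s1 s2 s3 :: "'a::{field,finite}^'n::finite^'n"
  assumes "transvection s1" "transvection s2" "transvection s3"
    and "det s1 = 1" "det s2 = 1" "det s3 = 1"
  shows "w [s1, s2, s3] - w [s1, s3, s2]
         = w [s1, s3] - w [s1, s2] * w [s2, s3] - w [conj_by s1 s2, s3]"
proof -
  define u1 f1 u2 f2 u3 f3 where "u1 = tv_u s1" "f1 = tv_f s1" "u2 = tv_u s2" "f2 = tv_f s2"
    "u3 = tv_u s3" "f3 = tv_f s3"
  have r1: "tv_rep s1 u1 f1" using rep_some assms(1) unfolding transvection_def u1_f1_u2_f2_u3_f3_def by blast
  have r2: "tv_rep s2 u2 f2" using rep_some assms(2) unfolding transvection_def u1_f1_u2_f2_u3_f3_def by blast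
  have r3: "tv_rep s3 u3 f3" using rep_some assms(3) unfolding transvection_def u1_f1_u2_f2_u3_f3_def by blast
  have s1: "s1 = mat 1 + outer u1 f1" and z1: "fapp f1 u1 = 0"
    using r1 unfolding tv_rep_def outer_def by auto
  have s2: "s2 = mat 1 + outer u2 f2" and z2: "fapp f2 u2 = 0"
    using r2 unfolding tv_rep_def outer_def by auto
  define u' where "u' = u1 - fapp f2 u1 *s u2"
  define f' where "f' = f1 + fapp f1 u2 *s f2"
  have C: "conj_by s1 s2 = mat 1 + outer u' f'"
  proof -
    have "conj_by s1 s2 = (mat 1 - outer u2 f2) ** (mat 1 + outer u1 f1) ** (mat 1 + outer u2 f2)"
      unfolding conj_by_def inv_tv[OF r2] using s1 s2 by simp
    also have "\<dots> = mat 1 + outer u' f'"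
      unfolding u'_def f'_def by (rule Ctest[OF z2])
    finally show ?thesis .
  qed
  have rC: "tv_rep (conj_by s1 s2) u' f'"
    unfolding tv_rep_def C outer_def
    by (simp add: u'_def f'_def fapp_diff_r fapp_smult_r fapp_add_l fapp_smult_l z1 z2 algebra_simps)
  have rC': "tv_rep (conj_by s1 s2) (tv_u (conj_by s1 s2)) (tv_f (conj_by s1 s2))"
    using rep_some rC by blast
  have wC: "w [conj_by s1 s2, s3] = fapp f3 u' * fapp f' u3"
    using rep_bilin[OF rC' rC, of f3 u3]
    unfolding w2 u1_f1_u2_f2_u3_f3_def by simp
  have w123: "w [s1, s2, s3] = fapp f2 u1 * fapp f3 u2 * fapp f1 u3"
    unfolding w2 w3 u1_f1_u2_f2_u3_f3_def ..
  have w132: "w [s1, s3, s2] = fapp f3 u1 * fapp f2 u3 * fapp f1 u2"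
    unfolding w2 w3 u1_f1_u2_f2_u3_f3_def ..
  have w13: "w [s1, s3] = fapp f3 u1 * fapp f1 u3"
    unfolding w2 w3 u1_f1_u2_f2_u3_f3_def ..
  have w12: "w [s1, s2] = fapp f2 u1 * fapp f1 u2"
    unfolding w2 w3 u1_f1_u2_f2_u3_f3_def ..
  have w23: "w [s2, s3] = fapp f3 u2 * fapp f2 u3"
    unfolding w2 w3 u1_f1_u2_f2_u3_f3_def ..
  have e1: "fapp f3 u' = fapp f3 u1 - fapp f2 u1 * fapp f3 u2"
    by (simp add: u'_def fapp_diff_r fapp_smult_r)
  have e2: "fapp f' u3 = fapp f1 u3 + fapp f1 u2 * fapp f2 u3"
    by (simp add: f'_def fapp_add_l fapp_smult_l)
  show ?thesis
    unfolding wC w123 w132 w13 w12 w23 e1 e2 by (simp add: algebra_simps)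
qed

end
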